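(* Let $V$ be a finite nonempty set, $c\in\mathbb{R}^{P_V}$ and $\hat x$ a maximally specific partial function on $P_V$. Define $x^+\in\{0,1\}^{P_V}$ by $x^+_e=1$ if $e\notin\operatorname{dom}(\hat x)$ and $c_e\ge0$; $x^+_e=0$ if $e\notin\operatorname{dom}(\hat x)$ and $c_e<0$; $x^+_e=\hat x_e$ if $e\in\operatorname{dom}(\hat x)$. Let $ij\in P_V\setminus\operatorname{dom}(\hat x)$ with $c_{ij}\ge0$. If $x^+\in X_V[\hat x]$, then $$\max_{x\in X_V[\hat x],\,x_{ij}=1}\varphi_c(x)=\varphi_c(x^+),$$ and, writing $\mathcal U=\{U\subseteq V\mid ij\in U\times(V\setminus U),\ (U\times(V\setminus U))\cap\hat x^{-1}(1)=\emptyset\}$ and $\sigma_U(x)$ for the vector with $\sigma_U(x)_{pq}=0$ if $pq\in U\times(V\setminus U)$ and $\sigma_U(x)_{pq}=x_{pq}$ otherwise, $$\max_{x\in X_V[\hat x],\,x_{ij}=0}\varphi_c(x)=\max_{U\in\mathcal U}\varphi_c(\sigma_U(x^+))=\varphi_c(x^+)-\min_{U\in\mathcal U}\sum_{pq\in(U\times(V\setminus U))\setminus\hat x^{-1}(0)}c_{pq}^+ .$$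
   Context: $P_V=\{pq\in V^2\mid p\neq q\}$; $X_V$ is the set of $x\in\{0,1\}^{P_V}$ with $x_{pq}+x_{qr}-x_{pr}\le 1$ for all pairwise distinct $p,q,r\in V$; $\varphi_c(x)=\sum_{pq\in P_V}c_{pq}x_{pq}$. A partial function $\tilde x$ is a map from $\operatorname{dom}(\tilde x)\subseteq P_V$ to $\{0,1\}$, $\tilde x^{-1}(b)$ the pairs mapped to $b$, and $X_V[\tilde x]=\{x\in X_V\mid x_{pq}=\tilde x_{pq}\ \forall pq\in\operatorname{dom}(\tilde x)\}$. A pair $pq$ is decided if $x_{pq}=x'_{pq}$ for all $x,x'\in X_V[\tilde x]$; $\tilde x$ is maximally specific if $X_V[\tilde x]\ne\emptyset$ and the decided pairs are exactly $\operatorname{dom}(\tilde x)$. For real $a$, $a^+=\max(a,0)$. *)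

theory Defs
  imports Complex_Main
begin

definition pairs :: "'a set \<Rightarrow> ('a \<times> 'a) set" where
  "pairs V = {(p, q). p \<in> V \<and> q \<in> V \<and> p \<noteq> q}"

text \<open>Vectors in {0,1}^(P_V) are represented as int-valued functions on pairs,
  taking values in {0,1} on P_V and (by convention) 0 outside P_V.\<close>
definition feasible :: "'a set \<Rightarrow> ('a \<times> 'a \<Rightarrow> int) set" where
  "feasible V = {x. (\<forall>e\<in>pairs V. x e \<in> {0, 1}) \<and> (\<forall>e. e \<notin> pairs V \<longrightarrow> x e = 0) \<and>
     (\<forall>p\<in>V. \<forall>q\<in>V. \<forall>r\<in>V. p \<noteq> q \<and> q \<noteq> r \<and> p \<noteq> r \<longrightarrow>
        x (p, q) + x (q, r) - x (p, r) \<le> 1)}"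

definition phi :: "('a \<times> 'a \<Rightarrow> real) \<Rightarrow> 'a set \<Rightarrow> ('a \<times> 'a \<Rightarrow> int) \<Rightarrow> real" where
  "phi c V x = (\<Sum>e\<in>pairs V. c e * of_int (x e))"

definition partial_fun :: "'a set \<Rightarrow> ('a \<times> 'a \<Rightarrow> int option) \<Rightarrow> bool" where
  "partial_fun V xh \<longleftrightarrow> dom xh \<subseteq> pairs V \<and> ran xh \<subseteq> {0, 1}"

definition feasible_restr :: "'a set \<Rightarrow> ('a \<times> 'a \<Rightarrow> int option) \<Rightarrow> ('a \<times> 'a \<Rightarrow> int) set" where
  "feasible_restr V xh = {x \<in> feasible V. \<forall>e\<in>dom xh. xh e = Some (x e)}"

definition decided :: "'a set \<Rightarrow> ('a \<times> 'a \<Rightarrow> int option) \<Rightarrow> ('a \<times> 'a) set" where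
  "decided V xh = {e \<in> pairs V. \<forall>x\<in>feasible_restr V xh. \<forall>x'\<in>feasible_restr V xh. x e = x' e}"

definition max_specific :: "'a set \<Rightarrow> ('a \<times> 'a \<Rightarrow> int option) \<Rightarrow> bool" where
  "max_specific V xh \<longleftrightarrow> feasible_restr V xh \<noteq> {} \<and> decided V xh = dom xh"

definition xplus :: "'a set \<Rightarrow> ('a \<times> 'a \<Rightarrow> real) \<Rightarrow> ('a \<times> 'a \<Rightarrow> int option) \<Rightarrow> 'a \<times> 'a \<Rightarrow> int" where
  "xplus V c xh e = (if e \<in> pairs V then
      (case xh e of Some b \<Rightarrow> b | None \<Rightarrow> (if c e \<ge> 0 then 1 else 0)) else 0)"

definition cut :: "'a set \<Rightarrow> 'a set \<Rightarrow> ('a \<times> 'a) set" where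
  "cut V U = U \<times> (V - U)"

definition sigma :: "'a set \<Rightarrow> 'a set \<Rightarrow> ('a \<times> 'a \<Rightarrow> int) \<Rightarrow> 'a \<times> 'a \<Rightarrow> int" where
  "sigma V U x e = (if e \<in> cut V U then 0 else x e)"

definition cutsets :: "'a set \<Rightarrow> ('a \<times> 'a \<Rightarrow> int option) \<Rightarrow> 'a \<times> 'a \<Rightarrow> 'a set set" where
  "cutsets V xh ij = {U. U \<subseteq> V \<and> ij \<in> cut V U \<and> cut V U \<inter> {e. xh e = Some 1} = {}}"

end

theory Submission
  imports Defs
begin

lemma finite_pairs: "finite V \<Longrightarrow> finite (pairs V)"
proof -
  assume "finite V"
  moreover have "pairs V \<subseteq> V \<times> V" by (auto simp: pairs_def)
  ultimately show ?thesis by (meson finite_SigmaI finite_subset)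
qed

lemma finite_feasible: "finite V \<Longrightarrow> finite (feasible V)"
proof -
  assume f: "finite V"
  have "feasible V \<subseteq> {f. \<forall>x. (x \<in> pairs V \<longrightarrow> f x \<in> {0,1}) \<and> (x \<notin> pairs V \<longrightarrow> f x = 0)}"
    by (auto simp: feasible_def)
  moreover have "finite {f. \<forall>x. (x \<in> pairs V \<longrightarrow> f x \<in> ({0,1}::int set)) \<and> (x \<notin> pairs V \<longrightarrow> f x = 0)}"
    by (rule finite_set_of_finite_funs) (use f finite_pairs in auto)
  ultimately show ?thesis by (rule finite_subset)
qed

lemma pointwise:
  assumes "x \<in> feasible_restr V xh" "e \<in> pairs V"
  shows "c e * of_int (x e) \<le> c e * of_int (xplus V c xh e)"
proof (cases "xh e")
  case None
  have "x e \<in> {0,1}" using assms by (auto simp: feasible_restr_def feasible_def)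
  then show ?thesis using None assms(2) by (auto simp: xplus_def)
next
  case (Some b)
  then have "e \<in> dom xh" by auto
  then have "xh e = Some (x e)" using assms(1) unfolding feasible_restr_def by blast
  then show ?thesis using Some assms(2) by (auto simp: xplus_def)
qed

lemma sigma_feasible:
  assumes pf: "partial_fun V xh" and X: "X \<in> feasible_restr V xh"
    and U: "U \<in> cutsets V xh ij"
  shows "sigma V U X \<in> feasible_restr V xh \<and> sigma V U X ij = 0"
proof -
  have UV: "U \<subseteq> V" and ijc: "ij \<in> cut V U" and nc: "cut V U \<inter> {e. xh e = Some 1} = {}"
    using U by (auto simp: cutsets_def)
  have Xf: "X \<in> feasible V" and Xd: "\<forall>e\<in>dom xh. xh e = Some (X e)"
    using X by (auto simp: feasible_restr_def)
  have "sigma V U X \<in> feasible V"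
    unfolding feasible_def
  proof (intro CollectI conjI ballI allI impI)
    fix e assume "e \<in> pairs V" then show "sigma V U X e \<in> {0,1}"
      using Xf by (auto simp: feasible_def sigma_def)
  next
    fix e assume "e \<notin> pairs V"
    then have "X e = 0" using Xf unfolding feasible_def by blast
    then show "sigma V U X e = 0" by (simp add: sigma_def)
  next
    fix p q r assume "p \<in> V" "q \<in> V" "r \<in> V" "p \<noteq> q \<and> q \<noteq> r \<and> p \<noteq> r"
    then have t: "X (p, q) + X (q, r) - X (p, r) \<le> 1" using Xf by (auto simp: feasible_def)
    have b: "X e \<in> {0,1}" if "e \<in> pairs V" for e using Xf that by (auto simp: feasible_def)
    have bpq: "X (p,q) \<in> {0,1}" "X (q,r) \<in> {0,1}" "X (p,r) \<in> {0,1}"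
      using b \<open>p \<in> V\<close> \<open>q \<in> V\<close> \<open>r \<in> V\<close> \<open>p \<noteq> q \<and> q \<noteq> r \<and> p \<noteq> r\<close>
      by (auto simp: pairs_def)
    show "sigma V U X (p, q) + sigma V U X (q, r) - sigma V U X (p, r) \<le> 1"
      using t bpq \<open>q \<in> V\<close> by (auto simp: sigma_def cut_def)
  qed
  moreover have "\<forall>e\<in>dom xh. xh e = Some (sigma V U X e)"
  proof
    fix e assume e: "e \<in> dom xh"
    show "xh e = Some (sigma V U X e)"
    proof (cases "e \<in> cut V U")
      case True
      obtain b where b: "xh e = Some b" using e by auto
      have "b \<in> ran xh" using b by (rule ranI)
      then have "b \<in> {0,1}" using pf by (auto simp: partial_fun_def)
      moreover have "b \<noteq> 1" using nc True b by auto
      ultimately show ?thesis using True b by (auto simp: sigma_def)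
    next
      case False then show ?thesis using Xd e by (auto simp: sigma_def)
    qed
  qed
  ultimately show ?thesis using ijc by (auto simp: feasible_restr_def sigma_def)
qed

lemma Max_diff_Min:
  fixes f :: "'b \<Rightarrow> real"
  assumes "finite S" "S \<noteq> {}"
  shows "Max ((\<lambda>U. a - f U) ` S) = a - Min (f ` S)"
proof -
  have "Min (f ` S) \<in> f ` S" using assms by (intro Min_in) auto
  then obtain U0 where U0: "U0 \<in> S" "f U0 = Min (f ` S)" by auto
  show ?thesis
  proof (rule Max_eqI)
    show "finite ((\<lambda>U. a - f U) ` S)" using assms by auto
  next
    fix y assume "y \<in> (\<lambda>U. a - f U) ` S"
    then show "y \<le> a - Min (f ` S)" using assms by (auto intro: Min_le)
  next
    show "a - Min (f ` S) \<in> (\<lambda>U. a - f U) ` S" using U0 by force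
  qed
qed

theorem proposition7p2:
  fixes V :: "'a set" and c :: "'a \<times> 'a \<Rightarrow> real" and xh :: "'a \<times> 'a \<Rightarrow> int option"
    and ij :: "'a \<times> 'a"
  assumes "finite V" and "V \<noteq> {}"
    and "partial_fun V xh" and "max_specific V xh"
    and "ij \<in> pairs V" and "ij \<notin> dom xh" and "c ij \<ge> 0"
    and "xplus V c xh \<in> feasible_restr V xh"
  shows "Max (phi c V ` {x \<in> feasible_restr V xh. x ij = 1}) = phi c V (xplus V c xh)
    \<and> Max (phi c V ` {x \<in> feasible_restr V xh. x ij = 0})
           = Max ((\<lambda>U. phi c V (sigma V U (xplus V c xh))) ` cutsets V xh ij)
    \<and> Max ((\<lambda>U. phi c V (sigma V U (xplus V c xh))) ` cutsets V xh ij)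
           = phi c V (xplus V c xh)
             - Min ((\<lambda>U. \<Sum>e\<in>cut V U - {e. xh e = Some 0}. max (c e) 0) ` cutsets V xh ij)"
proof -
  define X where "X = xplus V c xh"
  note fin = assms(1)
  note pf = assms(3)
  have XR: "X \<in> feasible_restr V xh" using assms(8) X_def by simp
  have le: "phi c V x \<le> phi c V X" if "x \<in> feasible_restr V xh" for x
    unfolding phi_def X_def by (rule sum_mono) (rule pointwise[OF that])
  have finR: "finite (feasible_restr V xh)"
    using finite_feasible[OF fin] by (rule finite_subset[rotated]) (auto simp: feasible_restr_def)
  have X1: "X ij = 1" using assms(5,6,7) by (auto simp: X_def xplus_def domIff)
  have part1: "Max (phi c V ` {x \<in> feasible_restr V xh. x ij = 1}) = phi c V X"
    by (rule Max_eqI) (use finR XR X1 le in auto)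
  obtain i j where ij: "ij = (i,j)" by (cases ij)
  have ijV: "i \<in> V" "j \<in> V" "i \<noteq> j" using assms(5) ij by (auto simp: pairs_def)
  have "ij \<notin> decided V xh" using assms(4,6) by (auto simp: max_specific_def)
  then obtain x1 x2 where x12: "x1 \<in> feasible_restr V xh" "x2 \<in> feasible_restr V xh" "x1 ij \<noteq> x2 ij"
    using assms(5) by (auto simp: decided_def)
  have "x1 ij \<in> {0,1}" "x2 ij \<in> {0,1}" using x12 assms(5) by (auto simp: feasible_restr_def feasible_def)
  then obtain x0 where x0: "x0 \<in> feasible_restr V xh" "x0 ij = 0" using x12 by auto
  have cutex: "\<exists>U\<in>cutsets V xh ij. phi c V x \<le> phi c V (sigma V U X)"
    if xR: "x \<in> feasible_restr V xh" and x0: "x ij = 0" for x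
  proof -
    define U where "U = insert i {p. x (i,p) = 1}"
    have xf: "x \<in> feasible V" and xd: "\<forall>e\<in>dom xh. xh e = Some (x e)"
      using xR by (auto simp: feasible_restr_def)
    have xout: "x e = 0" if "e \<notin> pairs V" for e using xf that unfolding feasible_def by blast
    have xb: "x e \<in> {0,1}" if "e \<in> pairs V" for e using xf that by (auto simp: feasible_def)
    have UV: "U \<subseteq> V"
    proof
      fix p assume "p \<in> U"
      then show "p \<in> V"
      proof (cases "p = i")
        case False
        then have "x (i,p) = 1" using \<open>p \<in> U\<close> U_def by auto
        then have "(i,p) \<in> pairs V" using xout by force
        then show ?thesis by (auto simp: pairs_def)
      qed (use ijV in auto)
    qed
    have zero: "x e = 0" if "e \<in> cut V U" for e
    proof -
      obtain p q where e: "e = (p,q)" by (cases e)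
      have pU: "p \<in> U" and qV: "q \<in> V" "q \<notin> U" using that e by (auto simp: cut_def)
      have qi: "q \<noteq> i" and xiq: "x (i,q) \<noteq> 1" using qV U_def by auto
      show ?thesis
      proof (cases "p = i")
        case True then show ?thesis using xiq e pairs_def xb xout by (metis insert_iff singletonD)
      next
        case False
        then have xip: "x (i,p) = 1" using pU U_def by auto
        have pV: "p \<in> V" using pU UV by auto
        have "x (p,q) \<noteq> 1"
        proof
          assume "x (p,q) = 1"
          moreover have "p \<noteq> q" using pU qV by auto
          have T: "\<forall>p\<in>V. \<forall>q\<in>V. \<forall>r\<in>V. p \<noteq> q \<and> q \<noteq> r \<and> p \<noteq> r \<longrightarrow>
            x (p, q) + x (q, r) - x (p, r) \<le> 1" using xf unfolding feasible_def by blast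
          have "x (i,p) + x (p,q) - x (i,q) \<le> 1"
            using T[rule_format, of i p q] ijV pV qV qi False \<open>p \<noteq> q\<close> by auto
          moreover have "(i,q) \<in> pairs V" using qV ijV qi by (auto simp: pairs_def)
          then have "x (i,q) = 0" using xiq xb[of "(i,q)"] by auto
          ultimately show False using xip \<open>x (p,q) = 1\<close> by simp
        qed
        then show ?thesis using e xb xout by (metis insert_iff singletonD)
      qed
    qed
    have jU: "j \<notin> U" using x0 ij ijV U_def by auto
    have ijc: "ij \<in> cut V U" using ij jU ijV by (auto simp: cut_def U_def)
    have nc: "cut V U \<inter> {e. xh e = Some 1} = {}"
    proof (rule ccontr)
      assume "\<not> ?thesis"
      then obtain e where "e \<in> cut V U" "xh e = Some 1" by auto
      then have "e \<in> dom xh" "xh e = Some 1" "x e = 0" using zero by auto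
      then have "xh e = Some (x e)" using xd by (meson bspec)
      then show False using \<open>xh e = Some 1\<close> \<open>x e = 0\<close> by simp
    qed
    have UC: "U \<in> cutsets V xh ij" using UV ijc nc by (auto simp: cutsets_def)
    have "phi c V x \<le> phi c V (sigma V U X)"
      unfolding phi_def
    proof (rule sum_mono)
      fix e assume e: "e \<in> pairs V"
      show "c e * of_int (x e) \<le> c e * of_int (sigma V U X e)"
        using zero[of e] pointwise[OF xR e, of c] by (auto simp: sigma_def X_def)
    qed
    then show ?thesis using UC by blast
  qed
  have finC: "finite (cutsets V xh ij)"
    by (rule finite_subset[of _ "Pow V"]) (use fin in \<open>auto simp: cutsets_def\<close>)
  obtain U0 where U0: "U0 \<in> cutsets V xh ij" using cutex[OF x0] by blast
  have part2: "Max (phi c V ` {x \<in> feasible_restr V xh. x ij = 0})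
           = Max ((\<lambda>U. phi c V (sigma V U X)) ` cutsets V xh ij)"
  proof (rule antisym)
    have "\<forall>y\<in>phi c V ` {x \<in> feasible_restr V xh. x ij = 0}. y \<le> Max ((\<lambda>U. phi c V (sigma V U X)) ` cutsets V xh ij)"
    proof
      fix y assume "y \<in> phi c V ` {x \<in> feasible_restr V xh. x ij = 0}"
      then obtain x where "x \<in> feasible_restr V xh" "x ij = 0" "y = phi c V x" by auto
      then obtain U where "U \<in> cutsets V xh ij" "y \<le> phi c V (sigma V U X)" using cutex by blast
      then show "y \<le> Max ((\<lambda>U. phi c V (sigma V U X)) ` cutsets V xh ij)"
        using finC by (meson Max_ge dual_order.trans finite_imageI image_eqI)
    qed
    then show "Max (phi c V ` {x \<in> feasible_restr V xh. x ij = 0}) \<le> Max ((\<lambda>U. phi c V (sigma V U X)) ` cutsets V xh ij)"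
      using finR x0 by (subst Max_le_iff) auto
  next
    have "\<forall>y\<in>(\<lambda>U. phi c V (sigma V U X)) ` cutsets V xh ij. y \<le> Max (phi c V ` {x \<in> feasible_restr V xh. x ij = 0})"
    proof
      fix y assume "y \<in> (\<lambda>U. phi c V (sigma V U X)) ` cutsets V xh ij"
      then obtain U where U: "U \<in> cutsets V xh ij" "y = phi c V (sigma V U X)" by auto
      have "sigma V U X \<in> {x \<in> feasible_restr V xh. x ij = 0}"
        using sigma_feasible[OF pf XR U(1)] by auto
      then show "y \<le> Max (phi c V ` {x \<in> feasible_restr V xh. x ij = 0})"
        using U finR by (intro Max_ge) auto
    qed
    then show "Max ((\<lambda>U. phi c V (sigma V U X)) ` cutsets V xh ij) \<le> Max (phi c V ` {x \<in> feasible_restr V xh. x ij = 0})"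
      using finC U0 by (subst Max_le_iff) auto
  qed
  have eqU: "phi c V (sigma V U X) = phi c V X - (\<Sum>e\<in>cut V U - {e. xh e = Some 0}. max (c e) 0)"
    if U: "U \<in> cutsets V xh ij" for U
  proof -
    have UV: "U \<subseteq> V" and nc: "cut V U \<inter> {e. xh e = Some 1} = {}" using U by (auto simp: cutsets_def)
    have cp: "cut V U \<subseteq> pairs V" using UV by (auto simp: cut_def pairs_def)
    have finP: "finite (pairs V)" using finite_pairs[OF fin] .
    have "phi c V X = (\<Sum>e\<in>pairs V. c e * of_int (sigma V U X e)) + (\<Sum>e\<in>pairs V. if e \<in> cut V U then c e * of_int (X e) else 0)"
      unfolding phi_def sum.distrib[symmetric] by (rule sum.cong) (auto simp: sigma_def)
    also have "(\<Sum>e\<in>pairs V. if e \<in> cut V U then c e * of_int (X e) else 0) = (\<Sum>e\<in>cut V U. c e * of_int (X e))"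
      using cp finP by (simp add: sum.If_cases Int_absorb1 inf.absorb2)
    also have "\<dots> = (\<Sum>e\<in>cut V U. if xh e = Some 0 then 0 else max (c e) 0)"
    proof (rule sum.cong[OF refl])
      fix e assume e: "e \<in> cut V U"
      have ep: "e \<in> pairs V" using e cp by auto
      show "c e * of_int (X e) = (if xh e = Some 0 then 0 else max (c e) 0)"
      proof (cases "xh e")
        case None then show ?thesis using ep by (auto simp: X_def xplus_def)
      next
        case (Some b)
        have "b \<in> ran xh" using Some by (rule ranI)
        then have "b \<in> {0,1}" using pf by (auto simp: partial_fun_def)
        moreover have "b \<noteq> 1" using nc e Some by auto
        ultimately show ?thesis using Some ep by (auto simp: X_def xplus_def)
      qed
    qed
    also have "\<dots> = (\<Sum>e\<in>cut V U - {e. xh e = Some 0}. max (c e) 0)"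
    proof -
      have fc: "finite (cut V U)" using cp finP finite_subset by blast
      have "(\<Sum>e\<in>cut V U. if xh e = Some 0 then 0 else max (c e) 0) = (\<Sum>e\<in>cut V U \<inter> - {e. xh e = Some 0}. max (c e) 0)"
        using fc by (simp add: sum.If_cases)
      then show ?thesis by (simp add: Diff_eq)
    qed
    finally show ?thesis unfolding phi_def by simp
  qed
  have part3: "Max ((\<lambda>U. phi c V (sigma V U X)) ` cutsets V xh ij)
           = phi c V X - Min ((\<lambda>U. \<Sum>e\<in>cut V U - {e. xh e = Some 0}. max (c e) 0) ` cutsets V xh ij)"
  proof -
    have "(\<lambda>U. phi c V (sigma V U X)) ` cutsets V xh ij = (\<lambda>U. phi c V X - (\<Sum>e\<in>cut V U - {e. xh e = Some 0}. max (c e) 0)) ` cutsets V xh ij"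
      using eqU by (auto intro!: image_cong)
    moreover have "cutsets V xh ij \<noteq> {}" using U0 by auto
    ultimately show ?thesis using Max_diff_Min[OF finC, where a="phi c V X" and
      f="\<lambda>U. \<Sum>e\<in>cut V U - {e. xh e = Some 0}. max (c e) 0"] by metis
  qed
  show ?thesis using part1 part2 part3 X_def by simp
qed

end
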